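(* Let $\mathbf v\in\mathbb Z^4$ be nonzero and suppose the orbit $\mathcal A[\mathbf v]=\{\mathbf U\mathbf v:\mathbf U\in\mathcal A\}$ contains a root quadruple $\mathbf a$. Then: (1) $\mathbf a$ is the unique reduced quadruple in $\mathcal A[\mathbf v]$; (2) all values $L(\mathbf x)$, $\mathbf x\in\mathcal A[\mathbf v]$, are nonzero and have the same sign, and if this sign is positive, then the general reduction algorithm started from any $\mathbf x\in\mathcal A[\mathbf v]$ applies only $\mathbf S_4$ (to the quadruple ordered increasingly) until the root quadruple is reached.
   Context: $\mathbf S_1,\dots,\mathbf S_4$ are the $4\times4$ integer matrices acting on column vectors $(a_1,a_2,a_3,a_4)^T$ by replacing the $i$-th coordinate $a_i$ with $2\sum_{j\ne i}a_j-a_i$, other coordinates fixed. The Apollonian group $\mathcal A$ is the subgroup of $GL(4,\mathbb Z)$ generated by $\mathbf S_1,\dots,\mathbf S_4$. For $\mathbf v=(a,b,c,d)$, $|\mathbf v|=|a|+|b|+|c|+|d|$ and $L(\mathbf v)=a+b+c+d$. General reduction algorithm: order the quadruple increasingly, then apply the first $\mathbf S_i$ ($i=1,2,3,4$ in order) that strictly decreases $|\mathbf v|$, and repeat; halt when no $\mathbf S_i$ strictly decreases $|\mathbf v|$. A quadruple is reduced if no $\mathbf S_i$ strictly decreases $|\mathbf v|$. A reduced quadruple $\mathbf a$, ordered as $a\le b\le c\le d$, with $L(\mathbf a)\ge0$ is a root quadruple if $a+b+c\ge d>0$; a reduced $\mathbf a$ with $L(\mathbf a)<0$ is a root quadruple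 if $(-d,-c,-b,-a)$ is one. *)

theory Defs
  imports Main
begin

text \<open>Quadruples (a1,a2,a3,a4) are represented as integer lists of length 4;
  coordinate a_i is the list entry at index i-1.\<close>

definition Lsum :: "int list \<Rightarrow> int" where
  "Lsum v = sum_list v"

definition absn :: "int list \<Rightarrow> int" where
  "absn v = sum_list (map abs v)"

definition Sgen :: "nat \<Rightarrow> int list \<Rightarrow> int list" where
  "Sgen i v = v[i := 2 * (sum_list v - v ! i) - v ! i]"

text \<open>The Apollonian group, acting on quadruples: generated by S_1..S_4.
  Since every generator is an involution, the generated group consists exactly
  of the finite products of generators.\<close>
inductive_set apollonian_group :: "(int list \<Rightarrow> int list) set" where
  id_in: "id \<in> apollonian_group"
| gen_comp: "U \<in> apollonian_group \<Longrightarrow> i < 4 \<Longrightarrow> Sgen i \<circ> U \<in> apollonian_group"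

definition orbit :: "int list \<Rightarrow> int list set" where
  "orbit v = {U v | U. U \<in> apollonian_group}"

definition reduced :: "int list \<Rightarrow> bool" where
  "reduced v \<longleftrightarrow> \<not> (\<exists>i<4. absn (Sgen i v) < absn v)"

definition root_nonneg :: "int list \<Rightarrow> bool" where
  "root_nonneg v \<longleftrightarrow> reduced v \<and> Lsum v \<ge> 0 \<and>
     (let s = sort v in s!0 + s!1 + s!2 \<ge> s!3 \<and> s!3 > 0)"

definition root_quadruple :: "int list \<Rightarrow> bool" where
  "root_quadruple v \<longleftrightarrow>
     (if Lsum v \<ge> 0 then root_nonneg v
      else reduced v \<and> root_nonneg (map uminus (rev (sort v))))"

definition first_decr :: "int list \<Rightarrow> nat" where
  "first_decr w = (LEAST i. i < 4 \<and> absn (Sgen i w) < absn w)"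

text \<open>One step of the general reduction algorithm: order increasingly, then apply
  the first decreasing generator; a reduced quadruple is left unchanged (halt).\<close>
definition red_step :: "int list \<Rightarrow> int list" where
  "red_step v = (if reduced v then v else (let w = sort v in Sgen (first_decr w) w))"

end

theory Submission
  imports Defs "HOL-Library.Multiset"
begin

lemma sum_list_upd:
  fixes v :: "int list"
  assumes "k < length v"
  shows "sum_list (v[k := c]) = sum_list v + c - v ! k"
proof -
  have "v = take k v @ v ! k # drop (Suc k) v" using assms by (rule id_take_nth_drop)
  then have "sum_list v = sum_list (take k v) + v ! k + sum_list (drop (Suc k) v)"
    by (metis add.assoc sum_list.Cons sum_list_append)
  moreover have "v[k := c] = take k v @ c # drop (Suc k) v"
    using assms by (rule upd_conv_take_nth_drop)
  ultimately show ?thesis by simp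
qed

lemma Lsum_Sgen:
  "k < length v \<Longrightarrow> Lsum (Sgen k v) = Lsum v + (2 * (Lsum v - v ! k) - v ! k) - v ! k"
  unfolding Lsum_def Sgen_def by (simp add: sum_list_upd)

lemma absn_Sgen:
  "k < length v \<Longrightarrow> absn (Sgen k v) = absn v + \<bar>2 * (Lsum v - v ! k) - v ! k\<bar> - \<bar>v ! k\<bar>"
  unfolding absn_def Sgen_def Lsum_def by (simp add: map_update sum_list_upd)

lemma length_Sgen[simp]: "length (Sgen k v) = length v"
  by (simp add: Sgen_def)

lemma Sgen_nth:
  "k < length v \<Longrightarrow> Sgen j v ! k = (if k = j then 2 * (Lsum v - v ! j) - v ! j else v ! k)"
  by (simp add: Sgen_def Lsum_def)

lemma Sgen_invol[simp]: "Sgen k (Sgen k v) = v"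
proof (cases "k < length v")
  case True
  have "Sgen k v ! k = 2 * (Lsum v - v ! k) - v ! k" using True by (simp add: Sgen_nth)
  moreover have "Lsum (Sgen k v) = Lsum v + (2 * (Lsum v - v ! k) - v ! k) - v ! k"
    using True by (rule Lsum_Sgen)
  ultimately show ?thesis using True
    by (simp add: Sgen_def Lsum_def[symmetric])
next
  case False
  then show ?thesis by (simp add: Sgen_def list_update_beyond)
qed

lemma sum_list_uminus: "sum_list (map uminus (v::int list)) = - sum_list v"
  using uminus_sum_list_map[of "\<lambda>x. x" v] by (simp add: comp_def)

lemma Sgen_uminus: "Sgen k (map uminus v) = map uminus (Sgen k v)"
proof (cases "k < length v")
  case True
  then show ?thesis by (simp add: Sgen_def map_update sum_list_uminus algebra_simps)
next
  case False
  then show ?thesis by (simp add: Sgen_def list_update_beyond)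
qed

lemma group_comp: "U \<in> apollonian_group \<Longrightarrow> W \<in> apollonian_group \<Longrightarrow> U \<circ> W \<in> apollonian_group"
proof (induction rule: apollonian_group.induct)
  case id_in
  then show ?case by simp
next
  case (gen_comp U i)
  then have "Sgen i \<circ> (U \<circ> W) \<in> apollonian_group" by (intro apollonian_group.gen_comp)
  then show ?case by (metis comp_assoc)
qed

lemma group_gen: "i < 4 \<Longrightarrow> Sgen i \<in> apollonian_group"
  using apollonian_group.gen_comp[OF apollonian_group.id_in] by simp

lemma group_inv: "U \<in> apollonian_group \<Longrightarrow> \<exists>V \<in> apollonian_group. \<forall>y. V (U y) = y"
proof (induction rule: apollonian_group.induct)
  case id_in
  then show ?case using apollonian_group.id_in by (intro bexI[of _ id]) auto
next
  case (gen_comp U i)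
  then obtain V where V: "V \<in> apollonian_group" "\<forall>y. V (U y) = y" by blast
  have "V \<circ> Sgen i \<in> apollonian_group" using V(1) group_gen[OF gen_comp(2)] by (rule group_comp)
  moreover have "\<forall>y. (V \<circ> Sgen i) ((Sgen i \<circ> U) y) = y" using V(2) by simp
  ultimately show ?case by blast
qed

lemma group_length: "U \<in> apollonian_group \<Longrightarrow> length (U y) = length y"
  by (induction rule: apollonian_group.induct) auto

lemma group_uminus: "U \<in> apollonian_group \<Longrightarrow> U (map uminus y) = map uminus (U y)"
  by (induction rule: apollonian_group.induct) (auto simp: Sgen_uminus)

lemma orbit_sub:
  assumes "a \<in> orbit v" "x \<in> orbit v"
  shows "x \<in> orbit a"
proof -
  obtain U0 where U0: "U0 \<in> apollonian_group" "a = U0 v" using assms(1) by (auto simp: orbit_def)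
  obtain U where U: "U \<in> apollonian_group" "x = U v" using assms(2) by (auto simp: orbit_def)
  obtain V where V: "V \<in> apollonian_group" "\<forall>y. V (U0 y) = y" using group_inv[OF U0(1)] by blast
  have "U \<circ> V \<in> apollonian_group" using U(1) V(1) by (rule group_comp)
  moreover have "x = (U \<circ> V) a" using U(2) U0(2) V(2) by simp
  ultimately show ?thesis unfolding orbit_def by blast
qed

lemma orbit_length: "x \<in> orbit v \<Longrightarrow> length x = length v"
  by (auto simp: orbit_def group_length)

lemma orbit_uminus: "x \<in> orbit v \<Longrightarrow> map uminus x \<in> orbit (map uminus v)"
proof -
  assume "x \<in> orbit v"
  then obtain U where "U \<in> apollonian_group" "x = U v" by (auto simp: orbit_def)
  then have "map uminus x = U (map uminus v)" by (simp add: group_uminus)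
  then show ?thesis using \<open>U \<in> apollonian_group\<close> unfolding orbit_def by blast
qed

lemma Lsum_uminus[simp]: "Lsum (map uminus v) = - Lsum v"
  by (simp add: Lsum_def sum_list_uminus)

lemma absn_uminus[simp]: "absn (map uminus v) = absn v"
  by (simp add: absn_def comp_def)

lemma reduced_uminus: "reduced (map uminus v) = reduced v"
  by (simp add: reduced_def Sgen_uminus[symmetric] absn_uminus[symmetric, of "Sgen _ v"])


section \<open>The tree of the orbit of a root quadruple\<close>

definition dl :: "int list \<Rightarrow> nat \<Rightarrow> int" where
  "dl x k = Lsum x - 2 * x ! k"

definition Inv :: "int list \<Rightarrow> nat option \<Rightarrow> bool" where
  "Inv x t \<longleftrightarrow> length x = 4 \<and> Lsum x > 0 \<and>
    (case t of None \<Rightarrow> (\<forall>k<4. dl x k \<ge> 0)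
     | Some i \<Rightarrow> i < 4 \<and> dl x i < 0 \<and> Lsum x - x ! i > 0 \<and>
         (\<forall>k<4. k \<noteq> i \<longrightarrow> dl x k > 0 \<and> dl x i + dl x k \<ge> 0))"

inductive tree :: "int list \<Rightarrow> int list \<Rightarrow> nat option \<Rightarrow> bool" for a where
  tr_root: "tree a a None"
| tr_step: "tree a x t \<Longrightarrow> j < 4 \<Longrightarrow> t \<noteq> Some j \<Longrightarrow> dl x j > 0 \<Longrightarrow> tree a (Sgen j x) (Some j)"

lemma Inv_step:
  assumes inv: "Inv x t" and j: "j < 4" and tj: "t \<noteq> Some j" and pos: "dl x j > 0"
  shows "Inv (Sgen j x) (Some j)"
proof -
  have len: "length x = 4" and L: "Lsum x > 0" using inv by (auto simp: Inv_def)
  have H: "dl x k + dl x j \<ge> 0 \<and> dl x k + 2 * dl x j > 0" if "k < 4" "k \<noteq> j" for k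
  proof (cases t)
    case None
    then have "dl x k \<ge> 0" using inv that by (auto simp: Inv_def)
    then show ?thesis using pos by simp
  next
    case (Some i)
    then have I: "i < 4 \<and> dl x i < 0 \<and> (\<forall>k<4. k \<noteq> i \<longrightarrow> dl x k > 0 \<and> dl x i + dl x k \<ge> 0)"
      using inv by (auto simp: Inv_def)
    show ?thesis
    proof (cases "k = i")
      case True
      then have "dl x i + dl x j \<ge> 0" using I j tj Some by auto
      then show ?thesis using True pos by simp
    next
      case False
      then have "dl x k > 0" using I that by auto
      then show ?thesis using pos by simp
    qed
  qed
  define c where "c = 2 * (Lsum x - x ! j) - x ! j"
  have Ly: "Lsum (Sgen j x) = Lsum x + c - x ! j" unfolding c_def using Lsum_Sgen j len by simp
  have yj: "Sgen j x ! j = c" unfolding c_def using Sgen_nth j len by simp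
  have yk: "Sgen j x ! k = x ! k" if "k < 4" "k \<noteq> j" for k using Sgen_nth that len by simp
  have dj: "dl x j = Lsum x - 2 * x ! j" by (simp add: dl_def)
  have A: "dl (Sgen j x) j = - dl x j" using Ly yj by (simp add: dl_def c_def)
  have B: "dl (Sgen j x) k = dl x k + 2 * dl x j" if "k < 4" "k \<noteq> j" for k
    using Ly yk[OF that] by (simp add: dl_def c_def)
  show ?thesis unfolding Inv_def option.case
  proof (intro conjI allI impI, goal_cases)
    case 1 then show ?case using len by simp
  next
    case 2 then show ?case using Ly L pos by (simp add: c_def dl_def)
  next
    case 3 then show ?case using j by simp
  next
    case 4 then show ?case using A pos by simp
  next
    case 5 then show ?case using Ly yj L pos by (simp add: c_def dl_def)
  next
    case (6 k) then show ?case using B[of k] H[of k] pos by simp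
  next
    case (7 k) then show ?case using A B[of k] H[of k] pos by simp
  qed
qed

lemma tree_Inv: assumes root: "Inv a None" shows "tree a x t \<Longrightarrow> Inv x t"
proof (induction rule: tree.induct)
  case tr_root
  then show ?case using root .
next
  case (tr_step x t j)
  then show ?case using Inv_step by blast
qed

lemma tree_None: "tree a x None \<Longrightarrow> x = a"
  by (cases rule: tree.cases) auto

lemma tree_Some: "tree a x (Some i) \<Longrightarrow> \<exists>y t. x = Sgen i y \<and> tree a y t"
  by (cases rule: tree.cases) auto

lemma tree_closed:
  assumes root: "Inv a None" and tr: "tree a x t" and j: "j < 4"
  shows "\<exists>t'. tree a (Sgen j x) t'"
proof (cases t)
  case None
  then have xa: "x = a" using tr tree_None by simp
  have "dl a j \<ge> 0" using root j by (auto simp: Inv_def)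
  show ?thesis
  proof (cases "dl a j = 0")
    case True
    have len: "length a = 4" using root by (simp add: Inv_def)
    have "2 * (sum_list a - a ! j) - a ! j = a ! j" using True by (simp add: dl_def Lsum_def)
    then have "Sgen j a = a" by (simp add: Sgen_def)
    then show ?thesis using xa tr by auto
  next
    case False
    then have "dl x j > 0" using \<open>dl a j \<ge> 0\<close> xa by simp
    then show ?thesis using tree.tr_step[OF tr j] None by blast
  qed
next
  case (Some i)
  show ?thesis
  proof (cases "j = i")
    case True
    then show ?thesis using tree_Some tr Some by fastforce
  next
    case False
    have "Inv x (Some i)" using tree_Inv root tr Some by simp
    then have "dl x j > 0" using j False by (auto simp: Inv_def)
    then show ?thesis using tree.tr_step[OF tr j] Some False by blast
  qed
qed

lemma group_tree:
  assumes root: "Inv a None"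
  shows "U \<in> apollonian_group \<Longrightarrow> \<exists>t. tree a (U a) t"
proof (induction rule: apollonian_group.induct)
  case id_in
  then show ?case using tree.tr_root by auto
next
  case (gen_comp U i)
  then show ?case using tree_closed[OF root] by auto
qed

lemma orbit_tree: "Inv a None \<Longrightarrow> x \<in> orbit a \<Longrightarrow> \<exists>t. tree a x t"
  unfolding orbit_def using group_tree by blast


section \<open>One step of the reduction algorithm\<close>

definition dec :: "int \<Rightarrow> int \<Rightarrow> bool" where
  "dec L t \<longleftrightarrow> \<bar>2 * (L - t) - t\<bar> < \<bar>t\<bar>"

lemma decr_iff: "k < length v \<Longrightarrow> (absn (Sgen k v) < absn v) = dec (Lsum v) (v ! k)"
  by (simp add: absn_Sgen dec_def)

lemma reduced_iff: "length v = 4 \<Longrightarrow> reduced v = (\<forall>y\<in>set v. \<not> dec (Lsum v) y)"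
  unfolding reduced_def by (auto simp: decr_iff in_set_conv_nth) (metis nth_mem)

lemma Lsum_mset: "mset z = mset x \<Longrightarrow> Lsum z = Lsum x"
  unfolding Lsum_def by (metis sum_mset_sum_list)

lemma reduced_mset: "mset z = mset x \<Longrightarrow> length x = 4 \<Longrightarrow> reduced z = reduced x"
proof -
  assume m: "mset z = mset x" and l: "length x = 4"
  have "length z = 4" using m l by (metis size_mset)
  moreover have "set z = set x" using m by (metis set_mset_mset)
  moreover have "Lsum z = Lsum x" using m by (rule Lsum_mset)
  ultimately show ?thesis using l by (simp add: reduced_iff)
qed

lemma sort_mset: "mset z = mset x \<Longrightarrow> sort z = sort x"
  by (rule properties_for_sort) auto

lemma top_step:
  assumes len: "length x = 4" and i: "i < 4" and di: "dec (Lsum x) (x ! i)"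
    and oth: "\<forall>k<4. k \<noteq> i \<longrightarrow> x ! k < x ! i \<and> \<not> dec (Lsum x) (x ! k)"
  shows "\<not> reduced x \<and> first_decr (sort x) = 3 \<and> mset (red_step x) = mset (Sgen i x)"
proof -
  define os where "os = take i x @ drop (Suc i) x"
  have xs: "x = take i x @ x ! i # drop (Suc i) x" using i len by (intro id_take_nth_drop) simp
  have mx: "mset x = mset os + {#x ! i#}"
    by (subst xs) (simp add: os_def)
  have los: "length os = 3" using i len by (simp add: os_def)
  have oset: "\<exists>k<4. k \<noteq> i \<and> y = x ! k" if "y \<in> set os" for y
  proof -
    have "y \<in> set (take i x) \<or> y \<in> set (drop (Suc i) x)" using that by (simp add: os_def)
    then show ?thesis
    proof
      assume "y \<in> set (take i x)"
      then obtain m where "m < length (take i x)" "y = take i x ! m" by (auto simp: in_set_conv_nth)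
      then show ?thesis using i len by (intro exI[of _ m]) auto
    next
      assume "y \<in> set (drop (Suc i) x)"
      then obtain m where "m < length (drop (Suc i) x)" "y = drop (Suc i) x ! m" by (auto simp: in_set_conv_nth)
      then show ?thesis using i len by (intro exI[of _ "Suc i + m"]) auto
    qed
  qed
  have oprop: "y < x ! i \<and> \<not> dec (Lsum x) y" if "y \<in> set os" for y
    using oset[OF that] oth by auto
  define ys where "ys = sort os @ [x ! i]"
  have "sorted ys" unfolding ys_def using oprop by (auto simp: sorted_append less_imp_le)
  moreover have "mset ys = mset x" unfolding ys_def using mx by simp
  ultimately have sx: "sort x = ys" by (intro properties_for_sort) auto
  have lys: "length ys = 4" using los by (simp add: ys_def)
  have Lys: "Lsum ys = Lsum x" using \<open>mset ys = mset x\<close> by (rule Lsum_mset)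
  have y3: "ys ! 3 = x ! i" using los by (simp add: ys_def nth_append)
  have ym: "ys ! m \<in> set os" if "m < 3" for m
  proof -
    have "sort os ! m \<in> set (sort os)" using los that by (intro nth_mem) simp
    then show ?thesis using los that by (simp add: ys_def nth_append)
  qed
  have nr: "\<not> reduced x" using len di i by (auto simp: reduced_iff)
  have fd: "first_decr ys = 3"
    unfolding first_decr_def
  proof (rule Least_equality)
    show "3 < (4::nat) \<and> absn (Sgen 3 ys) < absn ys" using lys Lys y3 di by (simp add: decr_iff)
  next
    fix m assume "m < 4 \<and> absn (Sgen m ys) < absn ys"
    then have "m < 4" "dec (Lsum x) (ys ! m)" using lys Lys by (auto simp: decr_iff)
    then show "3 \<le> m" using ym oprop by (metis not_le)
  qed
  define c where "c = 2 * (Lsum x - x ! i) - x ! i"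
  have "red_step x = Sgen 3 ys" using nr fd sx by (simp add: red_step_def)
  also have "\<dots> = sort os @ [c]" using los Lys y3
    by (simp add: Sgen_def ys_def c_def list_update_append Lsum_def)
  finally have r: "mset (red_step x) = mset os + {#c#}" by simp
  have "Sgen i x = take i x @ c # drop (Suc i) x" unfolding Sgen_def c_def Lsum_def
    using i len by (intro upd_conv_take_nth_drop) simp
  then have "mset (Sgen i x) = mset os + {#c#}" by (simp add: os_def)
  then show ?thesis using r nr fd sx by simp
qed


lemma Inv_top:
  assumes "Inv x (Some i)"
  shows "length x = 4 \<and> i < 4 \<and> dec (Lsum x) (x ! i) \<and>
    (\<forall>k<4. k \<noteq> i \<longrightarrow> x ! k < x ! i \<and> \<not> dec (Lsum x) (x ! k))"
proof -
  have I: "length x = 4" "Lsum x > 0" "i < 4" "dl x i < 0" "Lsum x - x ! i > 0"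
    "\<forall>k<4. k \<noteq> i \<longrightarrow> dl x k > 0 \<and> dl x i + dl x k \<ge> 0"
    using assms by (auto simp: Inv_def)
  have "dec (Lsum x) (x ! i)" using I(4,5) by (simp add: dec_def dl_def abs_if)
  moreover have "x ! k < x ! i \<and> \<not> dec (Lsum x) (x ! k)" if "k < 4" "k \<noteq> i" for k
  proof -
    have "dl x k > 0" using I(6) that by auto
    then show ?thesis using I(2,4) by (simp add: dec_def dl_def abs_if)
  qed
  ultimately show ?thesis using I by auto
qed

lemma tree_red:
  assumes root: "Inv a None"
  shows "tree a x t \<Longrightarrow> \<forall>z. mset z = mset x \<longrightarrow> (\<exists>n.
     (\<forall>k<n. \<not> reduced ((red_step ^^ k) z) \<and> first_decr (sort ((red_step ^^ k) z)) = 3)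
     \<and> mset ((red_step ^^ n) z) = mset a)"
proof (induction rule: tree.induct)
  case tr_root
  then show ?case by (intro allI impI exI[of _ 0]) auto
next
  case (tr_step x t j)
  define x' where "x' = Sgen j x"
  have tr': "tree a x' (Some j)" unfolding x'_def using tree.tr_step[OF tr_step(1-4)] .
  have "Inv x' (Some j)" using tree_Inv[OF root tr'] .
  then have T: "\<not> reduced x' \<and> first_decr (sort x') = 3 \<and> mset (red_step x') = mset (Sgen j x')"
    using Inv_top top_step by blast
  have len: "length x' = 4" using \<open>Inv x' (Some j)\<close> by (simp add: Inv_def)
  show ?case
  proof (intro allI impI)
    fix z assume mz: "mset z = mset (Sgen j x)"
    then have mz': "mset z = mset x'" by (simp add: x'_def)
    have nrz: "\<not> reduced z" using reduced_mset[OF mz' len] T by simp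
    have sz: "sort z = sort x'" using mz' by (rule sort_mset)
    have rz: "red_step z = red_step x'" using nrz T sz by (simp add: red_step_def)
    have "mset (red_step z) = mset x" using rz T by (simp add: x'_def)
    then obtain n where n: "\<forall>k<n. \<not> reduced ((red_step ^^ k) (red_step z)) \<and>
        first_decr (sort ((red_step ^^ k) (red_step z))) = 3"
      "mset ((red_step ^^ n) (red_step z)) = mset a"
      using tr_step.IH by blast
    have fs: "(red_step ^^ Suc k) z = (red_step ^^ k) (red_step z)" for k
      unfolding funpow_Suc_right by simp
    have "\<not> reduced ((red_step ^^ k) z) \<and> first_decr (sort ((red_step ^^ k) z)) = 3"
      if k: "k < Suc n" for k
    proof (cases k)
      case 0
      then show ?thesis using nrz sz T by simp
    next
      case (Suc k')
      then show ?thesis using n(1) k fs by simp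
    qed
    moreover have "mset ((red_step ^^ Suc n) z) = mset a" using n(2) fs by simp
    ultimately show "\<exists>n. (\<forall>k<n. \<not> reduced ((red_step ^^ k) z) \<and> first_decr (sort ((red_step ^^ k) z)) = 3)
        \<and> mset ((red_step ^^ n) z) = mset a" by blast
  qed
qed

lemma main_pos:
  assumes root: "Inv a None" and x: "x \<in> orbit a"
  shows "Lsum x > 0 \<and> (reduced x \<longrightarrow> x = a) \<and> (\<exists>n.
     (\<forall>k<n. \<not> reduced ((red_step ^^ k) x) \<and> first_decr (sort ((red_step ^^ k) x)) = 3)
     \<and> sort ((red_step ^^ n) x) = sort a)"
proof -
  obtain t where tr: "tree a x t" using orbit_tree[OF root x] by blast
  have inv: "Inv x t" using tree_Inv[OF root tr] .
  have "reduced x \<longrightarrow> x = a"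
  proof (cases t)
    case None
    then show ?thesis using tree_None tr by simp
  next
    case (Some i)
    then show ?thesis using inv Inv_top top_step by blast
  qed
  moreover have "Lsum x > 0" using inv by (simp add: Inv_def)
  moreover obtain n where "(\<forall>k<n. \<not> reduced ((red_step ^^ k) x) \<and> first_decr (sort ((red_step ^^ k) x)) = 3)"
     "mset ((red_step ^^ n) x) = mset a"
    using tree_red[OF root tr] by blast
  ultimately show ?thesis using sort_mset by blast
qed

lemma root_nonneg_prop:
  assumes len: "length w = 4" and r: "root_nonneg w"
  shows "(\<forall>y\<in>set w. 2 * y \<le> Lsum w) \<and> Lsum w > 0"
proof -
  define s where "s = sort w"
  have c: "s ! 0 + s ! 1 + s ! 2 \<ge> s ! 3" "s ! 3 > 0" using r by (auto simp: root_nonneg_def s_def Let_def)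
  have ls: "length s = 4" using len by (simp add: s_def)
  have ss: "sorted s" by (simp add: s_def)
  have Ls: "Lsum w = s ! 0 + s ! 1 + s ! 2 + s ! 3"
  proof -
    have "Lsum w = sum_list s" unfolding Lsum_def s_def by (metis mset_sort sum_mset_sum_list)
    moreover have "s = [s ! 0, s ! 1, s ! 2, s ! 3]" using ls
      by (intro nth_equalityI) (auto simp: less_Suc_eq numeral_eq_Suc)
    ultimately show ?thesis by (metis add.assoc add.right_neutral sum_list.Cons sum_list.Nil)
  qed
  have "y \<le> s ! 3" if "y \<in> set w" for y
  proof -
    have "y \<in> set s" using that by (simp add: s_def)
    then obtain m where "m < 4" "y = s ! m" using ls by (auto simp: in_set_conv_nth)
    then show ?thesis using ss ls by (auto intro: sorted_nth_mono)
  qed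
  then show ?thesis using c Ls by force
qed

lemma root_Inv:
  assumes len: "length a = 4" and r: "root_quadruple a"
  shows "(Lsum a \<ge> 0 \<and> Inv a None) \<or> (Lsum a < 0 \<and> Inv (map uminus a) None)"
proof (cases "Lsum a \<ge> 0")
  case True
  then have "root_nonneg a" using r by (simp add: root_quadruple_def)
  then have P: "(\<forall>y\<in>set a. 2 * y \<le> Lsum a) \<and> Lsum a > 0" using root_nonneg_prop len by blast
  have "Inv a None" unfolding Inv_def dl_def using P len by (auto simp: nth_mem)
  then show ?thesis using True by simp
next
  case False
  define b where "b = map uminus (rev (sort a))"
  have "root_nonneg b" using r False by (simp add: root_quadruple_def b_def)
  moreover have lb: "length b = 4" using len by (simp add: b_def)
  ultimately have P: "(\<forall>y\<in>set b. 2 * y \<le> Lsum b) \<and> Lsum b > 0" using root_nonneg_prop by blast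
  have Lb: "Lsum b = - Lsum a"
  proof -
    have "Lsum (rev (sort a)) = Lsum a" unfolding Lsum_def by (metis mset_rev mset_sort sum_mset_sum_list)
    then show ?thesis by (simp add: b_def)
  qed
  have "Inv (map uminus a) None" unfolding Inv_def dl_def option.case
  proof (intro conjI allI impI, goal_cases)
    case 1 then show ?case using len by simp
  next
    case 2 then show ?case using P Lb by simp
  next
    case (3 k)
    then have "- (a ! k) \<in> set b" using len by (simp add: b_def)
    then have "2 * (- (a ! k)) \<le> Lsum b" using P by blast
    then show ?case using Lb 3 len by simp
  qed
  then show ?thesis using False by simp
qed

theorem theorem3p2:
  fixes v a :: "int list"
  assumes "length v = 4"
    and "v \<noteq> [0, 0, 0, 0]"
    and "a \<in> orbit v"
    and "root_quadruple a"
  shows "(\<forall>x \<in> orbit v. reduced x \<longrightarrow> x = a)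
    \<and> (\<forall>x \<in> orbit v. Lsum x \<noteq> 0)
    \<and> ((\<forall>x \<in> orbit v. Lsum x > 0) \<or> (\<forall>x \<in> orbit v. Lsum x < 0))
    \<and> ((\<forall>x \<in> orbit v. Lsum x > 0) \<longrightarrow>
         (\<forall>x \<in> orbit v. \<exists>n.
            (\<forall>k<n. \<not> reduced ((red_step ^^ k) x)
                   \<and> first_decr (sort ((red_step ^^ k) x)) = 3)
            \<and> sort ((red_step ^^ n) x) = sort a))"
proof -
  have len: "length a = 4" using assms(1,3) orbit_length by metis
  have sub: "x \<in> orbit a" if "x \<in> orbit v" for x using assms(3) that by (rule orbit_sub)
  from root_Inv[OF len assms(4)] show ?thesis
  proof
    assume A: "0 \<le> Lsum a \<and> Inv a None"
    have M: "Lsum x > 0 \<and> (reduced x \<longrightarrow> x = a) \<and> (\<exists>n.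
     (\<forall>k<n. \<not> reduced ((red_step ^^ k) x) \<and> first_decr (sort ((red_step ^^ k) x)) = 3)
     \<and> sort ((red_step ^^ n) x) = sort a)" if "x \<in> orbit v" for x
      using main_pos[OF conjunct2[OF A] sub[OF that]] .
    show ?thesis
    proof (intro conjI)
      show "\<forall>x\<in>orbit v. reduced x \<longrightarrow> x = a" using M by blast
      show "\<forall>x\<in>orbit v. Lsum x \<noteq> 0" using M by force
      show "(\<forall>x\<in>orbit v. 0 < Lsum x) \<or> (\<forall>x\<in>orbit v. Lsum x < 0)" using M by blast
      show "(\<forall>x\<in>orbit v. 0 < Lsum x) \<longrightarrow> (\<forall>x\<in>orbit v. \<exists>n.
            (\<forall>k<n. \<not> reduced ((red_step ^^ k) x) \<and> first_decr (sort ((red_step ^^ k) x)) = 3)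
            \<and> sort ((red_step ^^ n) x) = sort a)" using M by blast
    qed
  next
    assume A: "Lsum a < 0 \<and> Inv (map uminus a) None"
    have M: "Lsum x < 0 \<and> (reduced x \<longrightarrow> x = a)" if "x \<in> orbit v" for x
    proof -
      have "map uminus x \<in> orbit (map uminus a)" using orbit_uminus sub[OF that] by blast
      then have R: "Lsum (map uminus x) > 0 \<and> (reduced (map uminus x) \<longrightarrow> map uminus x = map uminus a)"
        using main_pos[OF conjunct2[OF A]] by blast
      have "map uminus x = map uminus a \<Longrightarrow> x = a"
      proof -
        assume e: "map uminus x = map uminus a"
        have "x = map uminus (map uminus x)" by (simp add: comp_def)
        also have "\<dots> = a" by (simp add: e comp_def)
        finally show ?thesis .
      qed
      then show ?thesis using R by (simp add: reduced_uminus)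
    qed
    show ?thesis
    proof (intro conjI)
      show "\<forall>x\<in>orbit v. reduced x \<longrightarrow> x = a" using M by blast
      show "\<forall>x\<in>orbit v. Lsum x \<noteq> 0" using M by force
      show "(\<forall>x\<in>orbit v. 0 < Lsum x) \<or> (\<forall>x\<in>orbit v. Lsum x < 0)" using M by blast
      show "(\<forall>x\<in>orbit v. 0 < Lsum x) \<longrightarrow> (\<forall>x\<in>orbit v. \<exists>n.
            (\<forall>k<n. \<not> reduced ((red_step ^^ k) x) \<and> first_decr (sort ((red_step ^^ k) x)) = 3)
            \<and> sort ((red_step ^^ n) x) = sort a)"
      proof
        assume "\<forall>x\<in>orbit v. 0 < Lsum x"
        then have "0 < Lsum a" using assms(3) by blast
        then show "\<forall>x\<in>orbit v. \<exists>n.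
            (\<forall>k<n. \<not> reduced ((red_step ^^ k) x) \<and> first_decr (sort ((red_step ^^ k) x)) = 3)
            \<and> sort ((red_step ^^ n) x) = sort a" using A by simp
      qed
    qed
  qed
qed

end
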